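(* For $j\ge1$ let $h_j=p$ if $j=p^e$ for a prime $p$ and an integer $e\ge1$, and $h_j=1$ otherwise (so $(h_j)_{j\ge1}=1,2,3,2,5,1,7,2,3,1,11,1,13,1,1,2,17,\dots$). For $n\ge1$ define the sequence $N(n)=(N(n)_i)_{i\ge0}$ by $N(n)_i=\prod_{j=1}^{n}(B_{h_j,j})_i$, where $B_{c,M}=(b_i)_{i\ge0}$ denotes the sequence with $b_i=c$ if $i\ge1$ and $M\mid i$, and $b_i=1$ otherwise. Then for every $n\ge1$, $N(n)$ is cobweb-admissible and $N(n)_i=i$ for all $1\le i\le n$. In particular $N(n)_i\to i$ for each fixed $i$ as $n\to\infty$, i.e. $N(n)$ converges termwise to the sequence of natural numbers.
   Context: Notation: $n_F\equiv F_n$. A sequence $F=(n_F)_{n\ge0}$ of natural numbers with $0_F=1$ is cobweb-admissible iff every $F$-nomial coefficient $\binom{n}{k}_F=\frac{n_F(n-1)_F\cdots(n-k+1)_F}{1_F2_F\cdots k_F}$, $0\le k\le n$, is a nonnegative integer. *)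

theory Defs
  imports "HOL-Analysis.Analysis" "HOL-Computational_Algebra.Primes"
begin

definition fnomial :: "(nat \<Rightarrow> nat) \<Rightarrow> nat \<Rightarrow> nat \<Rightarrow> rat" where
  "fnomial F n k = (\<Prod>j\<in>{n-k+1..n}. of_nat (F j)) / (\<Prod>j\<in>{1..k}. of_nat (F j))"

definition cobweb_admissible :: "(nat \<Rightarrow> nat) \<Rightarrow> bool" where
  "cobweb_admissible F \<longleftrightarrow> F 0 = 1 \<and>
     (\<forall>n k. k \<le> n \<longrightarrow> (\<exists>m::nat. fnomial F n k = of_nat m))"

definition hseq :: "nat \<Rightarrow> nat" where
  "hseq j = (if \<exists>p e. prime p \<and> e \<ge> 1 \<and> j = p ^ e
             then (THE p. prime p \<and> (\<exists>e. e \<ge> 1 \<and> j = p ^ e)) else 1)"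

definition Bseqc :: "nat \<Rightarrow> nat \<Rightarrow> nat \<Rightarrow> nat" where
  "Bseqc c M i = (if i \<ge> 1 \<and> M dvd i then c else 1)"

definition Nseq :: "nat \<Rightarrow> nat \<Rightarrow> nat" where
  "Nseq n i = (\<Prod>j\<in>{1..n}. Bseqc (hseq j) j i)"

end

theory Submission
  imports Defs "HOL-Number_Theory.Prime_Powers"
begin

lemma hseq_pp: assumes "prime (p::nat)" "e \<ge> 1" shows "hseq (p ^ e) = p"
proof -
  have ex: "\<exists>p' e'. prime p' \<and> e' \<ge> 1 \<and> p ^ e = p' ^ e'" using assms by blast
  have "(THE q. prime q \<and> (\<exists>e'. e' \<ge> 1 \<and> p ^ e = q ^ e')) = p"
  proof (rule the_equality)
    show "prime p \<and> (\<exists>e'. e' \<ge> 1 \<and> p ^ e = p ^ e')" using assms by blast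
  next
    fix q assume "prime q \<and> (\<exists>e'. e' \<ge> 1 \<and> p ^ e = q ^ e')"
    then obtain e' where "prime q" "e' \<ge> 1" "p ^ e = q ^ e'" by blast
    then show "q = p" using prime_power_inj'(1)[of p q e e'] assms by auto
  qed
  then show ?thesis using ex unfolding hseq_def by simp
qed

lemma hseq_alt: "hseq j = (if primepow j then aprimedivisor j else 1)"
proof (cases "primepow j")
  case True
  then obtain p k where "prime p" "k > 0" "j = p ^ k" unfolding primepow_def by blast
  then show ?thesis using hseq_pp[of p k] aprimedivisor_prime_power[of p k] True by auto
next
  case False
  have "\<not> (\<exists>p e. prime p \<and> e \<ge> 1 \<and> j = p ^ e)"
  proof
    assume "\<exists>p e. prime p \<and> e \<ge> 1 \<and> j = p ^ e"
    then obtain p e where "prime p" "e \<ge> 1" "j = p ^ e" by blast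
    then have "primepow j" unfolding primepow_def by (intro exI[where x=p] exI[where x=e]) auto
    then show False using False by simp
  qed
  have "hseq j = 1" unfolding hseq_def using \<open>\<not> (\<exists>p e. prime p \<and> e \<ge> 1 \<and> j = p ^ e)\<close> by (rule if_not_P)
  then show ?thesis using False by simp
qed

lemma hseq_pos: "hseq j > 0"
  unfolding hseq_alt using aprimedivisor_pos_nat primepow_gt_Suc_0 by auto

lemma prod_primepow_factors:
  assumes "(n::nat) \<noteq> 0"
  shows "(\<Prod>d \<in> primepow_factors n. aprimedivisor d) = n"
proof -
  have "primepow_factors n =
               (\<lambda>(p,k). p ^ k) ` (SIGMA p:prime_factors n. {0<..multiplicity p n})"
    (is "_ = _ ` ?A") by (subst primepow_factors_altdef[OF assms]) fast+
  then have "(\<Prod>d \<in> primepow_factors n. aprimedivisor d) = prod aprimedivisor ((\<lambda>(p,k). p ^ k) ` ?A)"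
    by simp
  also have "prod aprimedivisor ((\<lambda>(p,k). p ^ k) ` ?A) = (\<Prod>(p,k)\<in>?A. aprimedivisor (p ^ k))"
    by (subst prod.reindex)
       (auto simp: inj_on_def prime_power_inj'' prime_factors_multiplicity
                   prod.Sigma [symmetric] case_prod_unfold)
  also have "\<dots> = (\<Prod>(p,k)\<in>?A. p)"
    by (intro prod.cong refl) (auto simp: aprimedivisor_prime_power prime_factors_multiplicity)
  also have "\<dots> = (\<Prod>x\<in>prime_factors n. \<Prod>k\<in>{0<..multiplicity x n}. x)"
    by (rule prod.Sigma [symmetric]) auto
  also have "\<dots> = (\<Prod>x\<in>prime_factors n. x ^ multiplicity x n)"
    by (intro prod.cong refl) (simp add: prod_constant)
  also have "\<dots> = n" using assms by (intro prime_factorization_nat [symmetric]) simp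
  finally show ?thesis .
qed

lemma Nseq_id: assumes "1 \<le> i" "i \<le> n" shows "Nseq n i = i"
proof -
  have "Nseq n i = (\<Prod>j\<in>{1..n}. if j dvd i then hseq j else 1)"
    unfolding Nseq_def Bseqc_def using assms by (intro prod.cong) auto
  also have "\<dots> = (\<Prod>j\<in>{1..n} \<inter> {j. j dvd i}. hseq j)"
    by (simp add: prod.If_cases)
  also have "\<dots> = (\<Prod>j\<in>primepow_factors i. hseq j)"
  proof (rule prod.mono_neutral_right)
    show "finite ({1..n} \<inter> {j. j dvd i})" by auto
    show "primepow_factors i \<subseteq> {1..n} \<inter> {j. j dvd i}"
      using assms primepow_gt_Suc_0 dvd_imp_le[of _ i]
      unfolding primepow_factors_def by fastforce
    show "\<forall>j\<in>{1..n} \<inter> {j. j dvd i} - primepow_factors i. hseq j = 1"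
      unfolding primepow_factors_def hseq_alt by auto
  qed
  also have "\<dots> = (\<Prod>j\<in>primepow_factors i. aprimedivisor j)"
    unfolding primepow_factors_def hseq_alt by (intro prod.cong) auto
  also have "\<dots> = i" using prod_primepow_factors assms by auto
  finally show ?thesis .
qed

lemma Bseqc_prod: assumes "j \<ge> 1"
  shows "(\<Prod>i\<in>{1..x}. Bseqc c j i) = c ^ (x div j)"
proof (induction x)
  case 0 then show ?case by simp
next
  case (Suc x)
  have "{1..Suc x} = insert (Suc x) {1..x}" by auto
  then have "(\<Prod>i\<in>{1..Suc x}. Bseqc c j i) = Bseqc c j (Suc x) * c ^ (x div j)"
    using Suc by simp
  note P = this
  show ?case
  proof (cases "j dvd Suc x")
    case True
    then have "Suc x mod j = 0" by (simp only: dvd_eq_mod_eq_0)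
    then have "Suc x div j = Suc (x div j)" using div_Suc[of x j] by simp
    moreover have "Bseqc c j (Suc x) = c" using True unfolding Bseqc_def by simp
    ultimately show ?thesis using P by simp
  next
    case False
    then have "Suc x mod j \<noteq> 0" by (simp only: dvd_eq_mod_eq_0) simp
    then have "Suc x div j = x div j" using div_Suc[of x j] by simp
    moreover have "Bseqc c j (Suc x) = 1" using False unfolding Bseqc_def by simp
    ultimately show ?thesis using P by simp
  qed
qed

lemma Nseq_prod: "(\<Prod>i\<in>{1..x}. Nseq N i) = (\<Prod>j\<in>{1..N}. hseq j ^ (x div j))"
  unfolding Nseq_def
  apply (subst prod.swap)
  apply (rule prod.cong[OF refl])
  apply (rule Bseqc_prod)
  apply simp
  done

lemma fnomial_split:
  fixes F :: "nat \<Rightarrow> nat"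
  assumes pos: "\<And>j. j \<ge> 1 \<Longrightarrow> F j > 0" and kn: "k \<le> n"
  shows "fnomial F n k = (\<Prod>j\<in>{1..n}. of_nat (F j)) /
     ((\<Prod>j\<in>{1..n-k}. of_nat (F j)) * (\<Prod>j\<in>{1..k}. of_nat (F j)))"
proof -
  define A where "A = (\<Prod>j\<in>{1..n-k}. (of_nat (F j)::rat))"
  define B where "B = (\<Prod>j\<in>{n-k+1..n}. (of_nat (F j)::rat))"
  define C where "C = (\<Prod>j\<in>{1..k}. (of_nat (F j)::rat))"
  have U: "{1..n} = {1..n-k} \<union> {n-k+1..n}" using kn by auto
  have eq: "(\<Prod>j\<in>{1..n}. (of_nat (F j)::rat)) = A * B"
    unfolding U A_def B_def by (rule prod.union_disjoint) auto
  have nzA: "A \<noteq> 0" unfolding A_def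
    using pos by (auto simp: prod_zero_iff)
  have "fnomial F n k = B / C" unfolding fnomial_def B_def C_def ..
  also have "\<dots> = (A * B) / (A * C)"
    by (rule nonzero_mult_divide_mult_cancel_left[symmetric, OF nzA])
  also have "\<dots> = (\<Prod>j\<in>{1..n}. of_nat (F j)) /
     ((\<Prod>j\<in>{1..n-k}. of_nat (F j)) * (\<Prod>j\<in>{1..k}. of_nat (F j)))"
    by (simp only: eq A_def C_def)
  finally show ?thesis .
qed

lemma pow_split: assumes "b + c \<le> (a::nat)" shows "(h::nat) ^ a = h ^ (a - b - c) * (h ^ b * h ^ c)"
proof -
  have e: "a = (a - b - c) + (b + c)" using assms by arith
  have F: "h ^ ((a - b - c) + (b + c)) = h ^ (a - b - c) * (h ^ b * h ^ c)"
    by (simp only: power_add)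
  show ?thesis using F[unfolded e[symmetric]] .
qed

lemma div_add_ge: "(a + b) div (m::nat) \<ge> a div m + b div m"
  by (subst div_add1_eq) simp

lemma Nseq_admissible: "cobweb_admissible (Nseq N)"
  unfolding cobweb_admissible_def
proof (intro conjI allI impI)
  show "Nseq N 0 = 1" unfolding Nseq_def Bseqc_def by simp
next
  fix n k :: nat assume kn: "k \<le> n"
  have pos: "\<And>j. Nseq N j > 0" unfolding Nseq_def Bseqc_def using hseq_pos
    by (auto intro!: prod_pos)
  define P where "P x = (\<Prod>j\<in>{1..N}. hseq j ^ (x div j))" for x
  define m where "m = (\<Prod>j\<in>{1..N}. hseq j ^ (n div j - (n-k) div j - k div j))"
  have Pn: "P n = m * (P (n-k) * P k)"
  proof -
    have "\<And>j. hseq j ^ (n div j) = hseq j ^ (n div j - (n-k) div j - k div j) *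
         (hseq j ^ ((n-k) div j) * hseq j ^ (k div j))"
    proof -
      fix j
      have nk: "n - k + k = n" using kn by (rule le_add_diff_inverse2)
      have "(n-k) div j + k div j \<le> (n - k + k) div j" by (rule div_add_ge)
      then have le: "(n-k) div j + k div j \<le> n div j" unfolding nk .
      show "hseq j ^ (n div j) = hseq j ^ (n div j - (n-k) div j - k div j) *
         (hseq j ^ ((n-k) div j) * hseq j ^ (k div j))"
        using le by (rule pow_split)
    qed
    then have "P n = (\<Prod>j\<in>{1..N}. hseq j ^ (n div j - (n-k) div j - k div j) *
         (hseq j ^ ((n-k) div j) * hseq j ^ (k div j)))"
      unfolding P_def by (intro prod.cong refl) blast
    also have "\<dots> = m * (P (n-k) * P k)"
      unfolding P_def m_def by (simp only: prod.distrib)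
    finally show ?thesis .
  qed
  have Q: "\<And>x. (\<Prod>j\<in>{1..x}. (of_nat (Nseq N j)::rat)) = of_nat (P x)"
    unfolding P_def Nseq_prod[symmetric] of_nat_prod by (rule refl)
  have "P (n-k) * P k > 0"
  proof -
    have "\<And>x. P x > 0" unfolding P_def using hseq_pos by (auto intro!: prod_pos)
    then show ?thesis by simp
  qed
  then have nz: "(of_nat (P (n-k)) * of_nat (P k) :: rat) \<noteq> 0" by simp
  have "fnomial (Nseq N) n k = of_nat (P n) / (of_nat (P (n-k)) * of_nat (P k))"
    using fnomial_split[of "Nseq N" k n, OF pos kn] unfolding Q .
  also have "\<dots> = of_nat m * (of_nat (P (n-k)) * of_nat (P k)) / (of_nat (P (n-k)) * of_nat (P k))"
    unfolding Pn by (simp only: of_nat_mult)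
  also have "\<dots> = of_nat m" using nz by (rule nonzero_mult_div_cancel_right)
  finally have "fnomial (Nseq N) n k = of_nat m" .
  then show "\<exists>m. fnomial (Nseq N) n k = of_nat m" by blast
qed

theorem mainTheorem12:
  shows "(\<forall>n\<ge>1. cobweb_admissible (Nseq n) \<and> (\<forall>i\<in>{1..n}. Nseq n i = i))
         \<and> (\<forall>i\<ge>1. (\<lambda>n. real (Nseq n i)) \<longlonglongrightarrow> real i)"
proof (intro conjI allI impI ballI)
  fix n :: nat show "cobweb_admissible (Nseq n)" by (rule Nseq_admissible)
next
  fix n i :: nat assume "i \<in> {1..n}" then show "Nseq n i = i" using Nseq_id by auto
next
  fix i :: nat assume i: "i \<ge> 1"
  show "(\<lambda>n. real (Nseq n i)) \<longlonglongrightarrow> real i"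
    by (rule tendsto_eventually) (use i Nseq_id in \<open>auto simp: eventually_sequentially\<close>)
qed

end
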